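(* For every $m\geq1$ and every $i\in\{1,\dots,N\}$, $$C^{(2m+1)}_{ii}\cdot v=C^{(2m+1)}_{-i,-i}\cdot v=\lambda_i(\lambda_i-1)\,C^{(2m-1)}_{ii}\cdot v-2\lambda_i\sum_{j=i+1}^{N}C^{(2m-1)}_{jj}\cdot v.$$
   Context: Let $N\geq1$, $I=\{-N,\dots,-1,1,\dots,N\}$, and for $k\in I$ put $\bar k=0$ if $k>0$, $\bar k=1$ if $k<0$. The Lie superalgebra $\mathfrak{q}(N)$ over $\mathbb{C}$ is spanned by elements $F_{ij}$ ($i,j\in I$) with $F_{-i,-j}=F_{ij}$ (realized as $F_{ij}=E_{ij}+E_{-i,-j}\in\mathfrak{gl}(N|N)$), $F_{ij}$ of parity $\bar\imath+\bar\jmath\bmod 2$, and supercommutator $$[F_{ij}, F_{kl}] = \delta_{kj} F_{il} - (-1)^{(\bar{\imath}+ \bar{\jmath})(\bar{k} + \bar{l})} \delta_{il} F_{kj} + \delta_{k,-j} F_{-i,l} - (-1)^{(\bar{\imath} + \bar{\jmath})(\bar{k} + \bar{l})} \delta_{-i,l} F_{k,-j}.$$ For $n\geq1$ define $C^{(n)}_{ij}\in U(\mathfrak{q}(N))$ by $$C^{(n)}_{ij} = \sum_{k_1,\ldots,k_{n-1}\in I}F_{ik_1} (-1)^{\bar{k}_1} F_{k_1k_2} (-1)^{\bar{k}_2} \cdots F_{k_{n-2}k_{n-1}} (-1)^{\bar{k}_{n-1}} F_{k_{n-1}j}$$ (so $C^{(1)}_{ij}=F_{ij}$). Let $V$ be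 a representation of $\mathfrak{q}(N)$ and $v\in V$ a vector such that $F_{ij}\cdot v=0$ whenever $|i|<|j|$, and $F_{ii}\cdot v=\lambda_i v$ for $i=1,\dots,N$, where $\lambda_1,\dots,\lambda_N\in\mathbb{C}$. *)

theory Defs
  imports Complex_Main
begin

definition qI :: "nat \<Rightarrow> int set" where
  "qI N = {-int N..-1} \<union> {1..int N}"

definition par :: "int \<Rightarrow> nat" where
  "par k = (if k < 0 then 1 else 0)"

definition qsgn :: "int \<Rightarrow> int \<Rightarrow> int \<Rightarrow> int \<Rightarrow> complex" where
  "qsgn i j k l = (-1) ^ ((par i + par j) * (par k + par l))"

text \<open>A representation of q(N) on the complex vector space (V, sc): operators F i j
  (the images of the generators F_ij), linear, with F(-i,-j) = F(i,j), satisfying the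
  supercommutator relations of q(N).\<close>
definition is_qrep ::
  "(complex \<Rightarrow> 'v::ab_group_add \<Rightarrow> 'v) \<Rightarrow> nat \<Rightarrow> (int \<Rightarrow> int \<Rightarrow> 'v \<Rightarrow> 'v) \<Rightarrow> bool" where
  "is_qrep sc N F \<longleftrightarrow>
     vector_space sc \<and>
     (\<forall>i\<in>qI N. \<forall>j\<in>qI N. Vector_Spaces.linear sc sc (F i j) \<and> F (-i) (-j) = F i j) \<and>
     (\<forall>i\<in>qI N. \<forall>j\<in>qI N. \<forall>k\<in>qI N. \<forall>l\<in>qI N. \<forall>x.
        F i j (F k l x) - sc (qsgn i j k l) (F k l (F i j x)) =
          (if k = j then F i l x else 0)
          - sc (qsgn i j k l) (if i = l then F k j x else 0)
          + (if k = -j then F (-i) l x else 0)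
          - sc (qsgn i j k l) (if -i = l then F k (-j) x else 0))"

text \<open>Action of C^{(n)}_{ij} (n \<ge> 1) on a vector x:
  C^{(1)}_{ij} = F_ij and C^{(n+1)}_{ij} = sum_k F_ik (-1)^{bar k} C^{(n)}_{kj}.
  The value for n = 0 is irrelevant (set to 0).\<close>
fun Cact :: "(complex \<Rightarrow> 'v::ab_group_add \<Rightarrow> 'v) \<Rightarrow> nat \<Rightarrow> (int \<Rightarrow> int \<Rightarrow> 'v \<Rightarrow> 'v)
              \<Rightarrow> nat \<Rightarrow> int \<Rightarrow> int \<Rightarrow> 'v \<Rightarrow> 'v" where
  "Cact sc N F 0 i j x = 0"
| "Cact sc N F (Suc 0) i j x = F i j x"
| "Cact sc N F (Suc (Suc n)) i j x =
     (\<Sum>k\<in>qI N. F i k (sc ((-1) ^ par k) (Cact sc N F (Suc n) k j x)))"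

end

theory Submission
  imports Defs
begin

definition sg :: "int \<Rightarrow> complex" where "sg k = (-1) ^ par k"

lemma qI_iff: "k \<in> qI N \<longleftrightarrow> k \<noteq> 0 \<and> \<bar>k\<bar> \<le> int N"
  unfolding qI_def by auto

lemma qI_neg[simp]: "-k \<in> qI N \<longleftrightarrow> k \<in> qI N"
  unfolding qI_iff by auto

lemma finite_qI[simp]: "finite (qI N)"
  unfolding qI_def by auto

lemma qI_image_neg: "uminus ` qI N = qI N"
proof
  show "qI N \<subseteq> uminus ` qI N"
  proof
    fix x assume "x \<in> qI N" then have "-x \<in> qI N" by simp
    then show "x \<in> uminus ` qI N" by (metis image_eqI minus_minus)
  qed
qed auto

lemma sum_qI_neg: "(\<Sum>k\<in>qI N. f (-k)) = (\<Sum>k\<in>qI N. f k)"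
proof -
  have "(\<Sum>k\<in>qI N. f k) = (\<Sum>k\<in>uminus ` qI N. f k)" by (simp add: qI_image_neg)
  also have "\<dots> = (\<Sum>k\<in>qI N. f (-k))" by (subst sum.reindex) (auto simp: inj_on_def)
  finally show ?thesis by simp
qed

lemma sum_qI_pairs: "(\<Sum>k\<in>qI N. f k) = (\<Sum>j\<in>{1..int N}. f j + f (-j))"
proof -
  have "qI N = uminus ` {1..int N} \<union> {1..int N}"
  proof
    show "qI N \<subseteq> uminus ` {1..int N} \<union> {1..int N}"
    proof
      fix x assume "x \<in> qI N"
      then show "x \<in> uminus ` {1..int N} \<union> {1..int N}"
        unfolding qI_def by (cases "x < 0") (auto intro: image_eqI[where x="-x"])
    qed
  qed (auto simp: qI_def)
  then have "(\<Sum>k\<in>qI N. f k) = (\<Sum>k\<in>uminus ` {1..int N}. f k) + (\<Sum>k\<in>{1..int N}. f k)"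
    by (simp add: sum.union_disjoint)
  also have "(\<Sum>k\<in>uminus ` {1..int N}. f k) = (\<Sum>k\<in>{1..int N}. f (-k))"
    by (subst sum.reindex) (auto simp: inj_on_def)
  finally show ?thesis by (simp add: sum.distrib add.commute)
qed

lemma sum_split_at:
  assumes "i \<in> {1..int N}"
  shows "(\<Sum>j\<in>{1..int N}. g j) = (\<Sum>j\<in>{1..<i}. g j) + g i + (\<Sum>j\<in>{i+1..int N}. g j)"
proof -
  have eq: "{1..int N} = {1..<i} \<union> insert i {i+1..int N}" using assms by auto
  have "(\<Sum>j\<in>{1..int N}. g j) = (\<Sum>j\<in>{1..<i} \<union> insert i {i+1..int N}. g j)"
    by (subst eq) (rule refl)
  also have "\<dots> = (\<Sum>j\<in>{1..<i}. g j) + (\<Sum>j\<in>insert i {i+1..int N}. g j)"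
    by (rule sum.union_disjoint) auto
  also have "(\<Sum>j\<in>insert i {i+1..int N}. g j) = g i + (\<Sum>j\<in>{i+1..int N}. g j)"
    by (rule sum.insert) auto
  finally show ?thesis by (simp add: add.assoc)
qed

lemma par01: "par k = 0 \<or> par k = 1" unfolding par_def by auto

lemma sg_sq[simp]: "sg k * sg k = 1"
  unfolding sg_def par_def by auto

lemma sg_neg: "k \<noteq> 0 \<Longrightarrow> sg (-k) = - sg k"
  unfolding sg_def par_def by auto

lemma sg_pos: "k > 0 \<Longrightarrow> sg k = 1" unfolding sg_def par_def by auto
lemma sg_negv: "k < 0 \<Longrightarrow> sg k = -1" unfolding sg_def par_def by auto

lemma neg1_sq: "((-1::complex)^n) * (-1)^n = 1"
  by (simp flip: power_mult_distrib)

lemma qsgn_sq[simp]: "qsgn a b c d * qsgn a b c d = 1"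
  unfolding qsgn_def by (rule neg1_sq)

lemma qsgn_mult: "qsgn a b k q * qsgn a b q l = qsgn a b k l"
proof -
  have "(par a + par b) * (par k + par q) + (par a + par b) * (par q + par l)
      = (par a + par b) * (par k + par l) + 2 * ((par a + par b) * par q)"
    by (simp add: algebra_simps)
  note E = this
  have "qsgn a b k q * qsgn a b q l = (-1::complex) ^ ((par a + par b) * (par k + par q) + (par a + par b) * (par q + par l))"
    unfolding qsgn_def by (simp only: power_add)
  also have "\<dots> = (-1) ^ ((par a + par b) * (par k + par l) + 2 * ((par a + par b) * par q))"
    by (simp only: E)
  also have "\<dots> = (-1) ^ ((par a + par b) * (par k + par l))"
    by (simp only: power_add power_mult) simp
  finally show ?thesis unfolding qsgn_def .
qed

lemma qsgn_mult': "qsgn a b k q * (qsgn a b q l * z) = qsgn a b k l * z"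
  by (simp add: mult.assoc[symmetric] qsgn_mult)

lemma qsgn_b_a: "qsgn a b k b * sg b = qsgn a b k a * sg a"
  unfolding qsgn_def sg_def par_def by auto

lemma qsgn_nb_na: "a \<noteq> 0 \<Longrightarrow> b \<noteq> 0 \<Longrightarrow> qsgn a b k (-b) * sg (-b) = qsgn a b k (-a) * sg (-a)"
  unfolding qsgn_def sg_def par_def by auto

locale qrep = vector_space sc for sc :: "complex \<Rightarrow> 'v::ab_group_add \<Rightarrow> 'v" +
  fixes N :: nat and F :: "int \<Rightarrow> int \<Rightarrow> 'v \<Rightarrow> 'v"
  assumes Fhom: "i \<in> qI N \<Longrightarrow> j \<in> qI N \<Longrightarrow> module_hom sc sc (F i j)"
  and Fsym: "i \<in> qI N \<Longrightarrow> j \<in> qI N \<Longrightarrow> F (-i) (-j) = F i j"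
  and Frel: "i \<in> qI N \<Longrightarrow> j \<in> qI N \<Longrightarrow> k \<in> qI N \<Longrightarrow> l \<in> qI N \<Longrightarrow>
        F i j (F k l x) - sc (qsgn i j k l) (F k l (F i j x)) =
          (if k = j then F i l x else 0)
          - sc (qsgn i j k l) (if i = l then F k j x else 0)
          + (if k = -j then F (-i) l x else 0)
          - sc (qsgn i j k l) (if -i = l then F k (-j) x else 0)"

lemma is_qrep_qrep: "is_qrep sc N F \<Longrightarrow> qrep sc N F"
  unfolding is_qrep_def qrep_def qrep_axioms_def
  by (auto simp: module_hom_iff_linear)

context qrep
begin

declare Cact.simps(3)[simp del]

abbreviation C where "C \<equiv> Cact sc N F"

lemma F_add: "i \<in> qI N \<Longrightarrow> j \<in> qI N \<Longrightarrow> F i j (x + y) = F i j x + F i j y"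
  using module_hom.add[OF Fhom] .
lemma F_scale: "i \<in> qI N \<Longrightarrow> j \<in> qI N \<Longrightarrow> F i j (sc c x) = sc c (F i j x)"
  using module_hom.scale[OF Fhom] .
lemma F_zero: "i \<in> qI N \<Longrightarrow> j \<in> qI N \<Longrightarrow> F i j 0 = 0"
  using module_hom.zero[OF Fhom] .
lemma F_diff: "i \<in> qI N \<Longrightarrow> j \<in> qI N \<Longrightarrow> F i j (x - y) = F i j x - F i j y"
  using module_hom.diff[OF Fhom] .
lemma F_neg: "i \<in> qI N \<Longrightarrow> j \<in> qI N \<Longrightarrow> F i j (- x) = - F i j x"
  using module_hom.neg[OF Fhom] .
lemma F_sum: "i \<in> qI N \<Longrightarrow> j \<in> qI N \<Longrightarrow> F i j (sum g A) = (\<Sum>a\<in>A. F i j (g a))"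
  using module_hom.sum[OF Fhom] .
lemma F_if: "i \<in> qI N \<Longrightarrow> j \<in> qI N \<Longrightarrow> F i j (if P then x else 0) = (if P then F i j x else 0)"
  by (simp add: F_zero)

lemmas Flin = F_add F_scale F_zero F_diff F_neg F_sum F_if

lemma C_Suc0[simp]: "C (Suc 0) i j x = F i j x" by simp

lemma C_step: "k \<in> qI N \<Longrightarrow>
  C (Suc (Suc m)) k l x = (\<Sum>q\<in>qI N. sc (sg q) (F k q (C (Suc m) q l x)))"
  by (simp add: Cact.simps(3) F_scale sg_def)

lemma C_lin: "a \<in> qI N \<Longrightarrow> b \<in> qI N \<Longrightarrow>
   C (Suc m) a b (x + y) = C (Suc m) a b x + C (Suc m) a b y \<and>
   C (Suc m) a b (sc c x) = sc c (C (Suc m) a b x)"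
proof (induction m arbitrary: a)
  case 0 then show ?case by (simp add: F_add F_scale)
next
  case (Suc m)
  show ?case using Suc by (simp add: C_step sum.distrib scale_right_distrib scale_sum_right F_add F_scale mult.commute)
qed

lemma C_add: "a \<in> qI N \<Longrightarrow> b \<in> qI N \<Longrightarrow> 0 < n \<Longrightarrow> C n a b (x + y) = C n a b x + C n a b y"
  using C_lin[of a b "n - 1"] by simp
lemma C_scale: "a \<in> qI N \<Longrightarrow> b \<in> qI N \<Longrightarrow> 0 < n \<Longrightarrow> C n a b (sc c x) = sc c (C n a b x)"
  using C_lin[of a b "n - 1"] by simp
lemma C_zero: "a \<in> qI N \<Longrightarrow> b \<in> qI N \<Longrightarrow> 0 < n \<Longrightarrow> C n a b 0 = 0"
  using C_scale[of a b n 0 0] by simp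
lemma C_neg: "a \<in> qI N \<Longrightarrow> b \<in> qI N \<Longrightarrow> 0 < n \<Longrightarrow> C n a b (- x) = - C n a b x"
  using C_scale[of a b n "-1" x] by simp

lemma C_right: "a \<in> qI N \<Longrightarrow> b \<in> qI N \<Longrightarrow>
  C (Suc (Suc m)) a b x = (\<Sum>k\<in>qI N. C (Suc m) a k (sc (sg k) (F k b x)))"
proof (induction m arbitrary: a)
  case 0 then show ?case by (simp add: C_step F_scale)
next
  case (Suc m)
  have "C (Suc (Suc (Suc m))) a b x = (\<Sum>q\<in>qI N. sc (sg q) (F a q (C (Suc (Suc m)) q b x)))"
    using Suc.prems by (intro C_step) simp
  also have "\<dots> = (\<Sum>q\<in>qI N. sc (sg q) (F a q (\<Sum>k\<in>qI N. C (Suc m) q k (sc (sg k) (F k b x)))))"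
    using Suc by (intro sum.cong refl) simp
  also have "\<dots> = (\<Sum>q\<in>qI N. \<Sum>k\<in>qI N. sc (sg q) (F a q (C (Suc m) q k (sc (sg k) (F k b x)))))"
    using Suc.prems by (intro sum.cong refl) (simp add: F_sum scale_sum_right)
  also have "\<dots> = (\<Sum>k\<in>qI N. \<Sum>q\<in>qI N. sc (sg q) (F a q (C (Suc m) q k (sc (sg k) (F k b x)))))"
    by (rule sum.swap)
  also have "\<dots> = (\<Sum>k\<in>qI N. C (Suc (Suc m)) a k (sc (sg k) (F k b x)))"
    using Suc.prems by (intro sum.cong refl) (simp add: C_step)
  finally show ?case .
qed

lemma C_sym: "a \<in> qI N \<Longrightarrow> b \<in> qI N \<Longrightarrow>
  C (Suc m) (-a) (-b) x = sc ((-1)^m) (C (Suc m) a b x)"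
proof (induction m arbitrary: a)
  case 0 then show ?case by (simp add: Fsym)
next
  case (Suc m)
  have "C (Suc (Suc m)) (-a) (-b) x = (\<Sum>q\<in>qI N. sc (sg q) (F (-a) q (C (Suc m) q (-b) x)))"
    using Suc.prems by (intro C_step) simp
  also have "\<dots> = (\<Sum>q\<in>qI N. sc (sg (-q)) (F (-a) (-q) (C (Suc m) (-q) (-b) x)))"
    by (rule sum_qI_neg[symmetric])
  also have "\<dots> = (\<Sum>q\<in>qI N. sc ((-1)^Suc m) (sc (sg q) (F a q (C (Suc m) q b x))))"
  proof (intro sum.cong refl)
    fix q assume q: "q \<in> qI N"
    then have "q \<noteq> 0" by (simp add: qI_iff)
    then show "sc (sg (-q)) (F (-a) (-q) (C (Suc m) (-q) (-b) x)) = sc ((-1)^Suc m) (sc (sg q) (F a q (C (Suc m) q b x)))"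
      using q Suc by (simp add: sg_neg Fsym F_scale mult.commute)
  qed
  also have "\<dots> = sc ((-1)^Suc m) (C (Suc (Suc m)) a b x)"
    using Suc.prems by (simp add: C_step scale_sum_right F_scale mult.commute)
  finally show ?case .
qed

lemma sc_if: "sc c (if P then x else 0) = (if P then sc c x else 0)"
  by simp

lemma sum_if_const: "(\<Sum>q\<in>A. if P then f q else 0) = (if P then (\<Sum>q\<in>A. f q) else 0)"
  by (cases P) simp_all

lemma C_cov: "a \<in> qI N \<Longrightarrow> b \<in> qI N \<Longrightarrow> k \<in> qI N \<Longrightarrow> l \<in> qI N \<Longrightarrow>
  F a b (C (Suc m) k l x) - sc (qsgn a b k l) (C (Suc m) k l (F a b x)) =
    (if k = b then C (Suc m) a l x else 0)
    - sc (qsgn a b k l) (if a = l then C (Suc m) k b x else 0)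
    + (if k = -b then C (Suc m) (-a) l x else 0)
    - sc (qsgn a b k l) (if -a = l then C (Suc m) k (-b) x else 0)"
proof (induction m arbitrary: k)
  case 0 then show ?case by (simp add: Frel)
next
  case (Suc m)
  note ab = Suc.prems(1,2) and kl = Suc.prems(3,4)
  define Q where "Q = qsgn a b k l"
  let ?C1 = "C (Suc m)" and ?C2 = "C (Suc (Suc m))"
  define A1 where "A1 q = (if k = b then sc (sg q) (F a q (?C1 q l x)) else 0)" for q
  define A2 where "A2 q = (if a = q then sc (sg q * qsgn a b k q) (F k b (?C1 q l x)) else 0)" for q
  define A3 where "A3 q = (if k = -b then sc (sg q) (F (-a) q (?C1 q l x)) else 0)" for q
  define A4 where "A4 q = (if -a = q then sc (sg q * qsgn a b k q) (F k (-b) (?C1 q l x)) else 0)" for q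
  define A5 where "A5 q = (if q = b then sc (sg q * qsgn a b k q) (F k q (?C1 a l x)) else 0)" for q
  define A6 where "A6 q = (if a = l then sc Q (sc (sg q) (F k q (?C1 q b x))) else 0)" for q
  define A7 where "A7 q = (if q = -b then sc (sg q * qsgn a b k q) (F k q (?C1 (-a) l x)) else 0)" for q
  define A8 where "A8 q = (if -a = l then sc Q (sc (sg q) (F k q (?C1 q (-b) x))) else 0)" for q
  have t: "sc (sg q) (F a b (F k q (?C1 q l x))) - sc Q (sc (sg q) (F k q (?C1 q l (F a b x))))
      = A1 q - A2 q + A3 q - A4 q + A5 q - A6 q + A7 q - A8 q" if q: "q \<in> qI N" for q
  proof -
    let ?y = "?C1 q l x"
    have e1: "F a b (F k q ?y) = ((if k = b then F a q ?y else 0)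
          - sc (qsgn a b k q) (if a = q then F k b ?y else 0)
          + (if k = -b then F (-a) q ?y else 0)
          - sc (qsgn a b k q) (if -a = q then F k (-b) ?y else 0))
          + sc (qsgn a b k q) (F k q (F a b ?y))"
      using Frel[OF ab Suc.prems(3) q, of ?y] by (simp add: algebra_simps)
    have e2: "F a b ?y = ((if q = b then ?C1 a l x else 0)
          - sc (qsgn a b q l) (if a = l then ?C1 q b x else 0)
          + (if q = -b then ?C1 (-a) l x else 0)
          - sc (qsgn a b q l) (if -a = l then ?C1 q (-b) x else 0))
          + sc (qsgn a b q l) (?C1 q l (F a b x))"
      using Suc.IH[OF ab q kl(2)] by (simp add: algebra_simps)
    have Q12: "qsgn a b k q * qsgn a b q l = Q" by (simp add: Q_def qsgn_mult)
    have Q12': "qsgn a b k q * (qsgn a b q l * z) = Q * z" for z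
      using Q12 by (simp add: mult.assoc[symmetric])
    show ?thesis
      unfolding e1 e2 A1_def A2_def A3_def A4_def A5_def A6_def A7_def A8_def
      using ab kl q by (simp add: Flin sc_if algebra_simps qsgn_mult qsgn_mult' Q_def split del: if_split cong: if_cong)
  qed
  have L: "F a b (?C2 k l x) - sc Q (?C2 k l (F a b x)) =
     (\<Sum>q\<in>qI N. sc (sg q) (F a b (F k q (?C1 q l x))) - sc Q (sc (sg q) (F k q (?C1 q l (F a b x)))))"
    using ab kl by (simp add: C_step F_sum F_scale scale_sum_right sum_subtractf)
  also have "\<dots> = (\<Sum>q\<in>qI N. A1 q - A2 q + A3 q - A4 q + A5 q - A6 q + A7 q - A8 q)"
    by (rule sum.cong[OF refl t])
  also have "\<dots> = sum A1 (qI N) - sum A2 (qI N) + sum A3 (qI N) - sum A4 (qI N)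
      + sum A5 (qI N) - sum A6 (qI N) + sum A7 (qI N) - sum A8 (qI N)"
    by (simp add: sum.distrib sum_subtractf)
  also have "sum A1 (qI N) = (if k = b then ?C2 a l x else 0)"
    unfolding A1_def sum_if_const using ab by (simp add: C_step)
  also have "sum A3 (qI N) = (if k = -b then ?C2 (-a) l x else 0)"
    unfolding A3_def sum_if_const using ab by (simp add: C_step)
  also have "sum A6 (qI N) = sc Q (if a = l then ?C2 k b x else 0)"
    unfolding A6_def sum_if_const using kl by (simp add: C_step scale_sum_right)
  also have "sum A8 (qI N) = sc Q (if -a = l then ?C2 k (-b) x else 0)"
    unfolding A8_def sum_if_const using kl by (simp add: C_step scale_sum_right)
  also have "sum A5 (qI N) = sum A2 (qI N)"
    unfolding A5_def A2_def using ab qsgn_b_a[of a b k] by (simp add: sum.delta sum.delta' mult.commute)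
  also have "sum A7 (qI N) = sum A4 (qI N)"
  proof -
    have "a \<noteq> 0" "b \<noteq> 0" using ab by (auto simp: qI_iff)
    then show ?thesis
      unfolding A7_def A4_def using ab qsgn_nb_na[of a b k] by (simp add: sum.delta sum.delta' mult.commute)
  qed
  finally show ?case unfolding Q_def by simp
qed

lemma qsgn_nz: "qsgn a b c d \<noteq> 0"
  unfolding qsgn_def by simp

lemma C_hw:
  assumes hw: "\<forall>a\<in>qI N. \<forall>b\<in>qI N. \<bar>a\<bar> < \<bar>b\<bar> \<longrightarrow> F a b u = 0"
  shows "a \<in> qI N \<Longrightarrow> b \<in> qI N \<Longrightarrow> \<bar>a\<bar> < \<bar>b\<bar> \<Longrightarrow> C (Suc m) a b u = 0"
proof (induction m arbitrary: a b)
  case 0 then show ?case using hw by simp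
next
  case (Suc m)
  have "C (Suc (Suc m)) a b u = (\<Sum>k\<in>qI N. C (Suc m) a k (sc (sg k) (F k b u)))"
    using Suc.prems by (intro C_right) auto
  also have "\<dots> = (\<Sum>k\<in>qI N. 0)"
  proof (intro sum.cong refl)
    fix k assume k: "k \<in> qI N"
    show "C (Suc m) a k (sc (sg k) (F k b u)) = 0"
    proof (cases "\<bar>k\<bar> < \<bar>b\<bar>")
      case True
      then show ?thesis using hw k Suc.prems by (simp add: C_scale C_zero)
    next
      case False
      then have ak: "\<bar>a\<bar> < \<bar>k\<bar>" using Suc.prems by auto
      have z1: "C (Suc m) a k u = 0" using Suc.IH[OF Suc.prems(1) k ak] .
      have z2: "C (Suc m) a b u = 0" using Suc.IH[OF Suc.prems] .
      have "a \<noteq> b" "a \<noteq> -b" "-k \<noteq> k" using Suc.prems k by (auto simp: qI_iff)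
      then have "sc (qsgn k b a k) (C (Suc m) a k (F k b u)) = 0"
        using C_cov[OF k Suc.prems(2) Suc.prems(1) k, of m u] z1 z2 k Suc.prems by (simp add: F_zero)
      then have "C (Suc m) a k (F k b u) = 0" using qsgn_nz by simp
      then show ?thesis using k Suc.prems by (simp add: C_scale)
    qed
  qed
  finally show ?case by simp
qed

end

lemma qsgn_kiik: "i > 0 \<Longrightarrow> qsgn k i i k = sg k"
  unfolding qsgn_def sg_def par_def by auto

lemma qsgn_kniik: "i > 0 \<Longrightarrow> qsgn k (-i) i k = 1"
  unfolding qsgn_def par_def by auto

lemma qsgn_inii: "i > 0 \<Longrightarrow> qsgn i (-i) i (-i) = -1"
  unfolding qsgn_def par_def by auto

lemma qsgn_iiini: "i > 0 \<Longrightarrow> qsgn i i i (-i) = 1"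
  unfolding qsgn_def par_def by auto

locale hwctx = qrep sc N F for sc :: "complex \<Rightarrow> 'v::ab_group_add \<Rightarrow> 'v" and N F +
  fixes v :: 'v and lam :: complex and i :: int
  assumes hwv: "\<forall>a\<in>qI N. \<forall>b\<in>qI N. \<bar>a\<bar> < \<bar>b\<bar> \<longrightarrow> F a b v = 0"
  and iN: "i \<in> {1..int N}"
  and ev: "F i i v = sc lam v"
begin

lemma iI: "i \<in> qI N" and niI: "-i \<in> qI N" and ipos: "i > 0"
  using iN by (auto simp: qI_iff)

lemma sc2: "sc 2 x = x + x"
  using scale_left_distrib[of 1 1 x] by (simp add: one_add_one)

lemma hwv': "a \<in> qI N \<Longrightarrow> b \<in> qI N \<Longrightarrow> \<bar>a\<bar> < \<bar>b\<bar> \<Longrightarrow> F a b v = 0"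
  using hwv by blast

definition "w = F i (-i) v"

lemma hw_w: "\<forall>a\<in>qI N. \<forall>b\<in>qI N. \<bar>a\<bar> < \<bar>b\<bar> \<longrightarrow> F a b w = 0"
proof (intro ballI impI)
  fix a b assume a: "a \<in> qI N" and b: "b \<in> qI N" and ab: "\<bar>a\<bar> < \<bar>b\<bar>"
  have r: "F a b w - sc (qsgn a b i (-i)) (F i (-i) (F a b v)) =
          (if i = b then F a (-i) v else 0)
          - sc (qsgn a b i (-i)) (if a = -i then F i b v else 0)
          + (if i = -b then F (-a) (-i) v else 0)
          - sc (qsgn a b i (-i)) (if -a = -i then F i (-b) v else 0)"
    unfolding w_def using Frel[OF a b iI niI] .
  have 0: "F a b v = 0" using hwv' a b ab .
  have 1: "(if i = b then F a (-i) v else 0) = 0" using hwv' a niI ab by auto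
  have 2: "(if a = -i then F i b v else 0) = 0" using hwv' iI b ab by auto
  have 3: "(if i = -b then F (-a) (-i) v else 0) = 0" using hwv'[of "-a" "-i"] a niI ab by auto
  have 4: "(if -a = -i then F i (-b) v else 0) = 0" using hwv'[of i "-b"] iI b ab by auto
  show "F a b w = 0" using r 0 1 2 3 4 by (simp add: F_zero iI niI)
qed

lemma Fsym_i: "F (-i) i = F i (-i)" "F (-i) (-i) = F i i"
  using Fsym[OF iI niI] Fsym[OF iI iI] by simp_all

lemma F_w: "F i (-i) w = sc lam v"
proof -
  have "F i (-i) w - sc (-1) (F i (-i) w) = F (-i) (-i) v - sc (-1) (F i i v)"
    using Frel[OF iI niI iI niI, of v] ipos unfolding w_def by (simp add: qsgn_inii)
  then have "F i (-i) w + F i (-i) w = sc lam v + sc lam v"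
    by (simp add: Fsym_i ev)
  then have "sc 2 (F i (-i) w) = sc 2 (sc lam v)"
    by (simp only: sc2)
  then show ?thesis by (simp only: scale_cancel_left) simp
qed

lemma F_iiw: "F i i w = sc lam w"
proof -
  have "F i i w - F i (-i) (F i i v) = 0"
    using Frel[OF iI iI iI niI, of v] ipos unfolding w_def by (simp add: qsgn_iiini)
  then show ?thesis by (simp add: ev F_scale iI niI w_def)
qed

lemma jI: "j \<in> {i+1..int N} \<Longrightarrow> j \<in> qI N \<and> -j \<in> qI N \<and> i < \<bar>j\<bar> \<and> i < \<bar>-j\<bar> \<and> j > 0"
  using ipos by (auto simp: qI_iff)

lemma jI': "j \<in> {1..<i} \<Longrightarrow> j \<in> qI N \<and> -j \<in> qI N \<and> \<bar>j\<bar> < i \<and> \<bar>-j\<bar> < i \<and> j > 0"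
  using iN by (auto simp: qI_iff)

lemma crec: "C (Suc (Suc m)) i i v = sc lam (C (Suc m) i i v) - C (Suc m) i (-i) w
   - (\<Sum>j\<in>{i+1..int N}. C (Suc m) j j v + C (Suc m) (-j) (-j) v)"
proof -
  define T where "T k = C (Suc m) i k (sc (sg k) (F k i v))" for k
  have Tbig: "T k = sc (sg k) (C (Suc m) i i v) - C (Suc m) k k v" if k: "k \<in> qI N" "i < \<bar>k\<bar>" for k
  proof -
    have z: "C (Suc m) i k v = 0" using C_hw[OF hwv iI k(1)] k ipos by auto
    have "-k \<noteq> k" "i \<noteq> -i" using k ipos by (auto simp: qI_iff)
    then have E: "- sc (sg k) (C (Suc m) i k (F k i v)) = C (Suc m) k k v - sc (sg k) (C (Suc m) i i v)"
      using C_cov[OF k(1) iI iI k(1), of m v] z k ipos iI by (simp add: qsgn_kiik F_zero)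
    have "sc (sg k) (- sc (sg k) (C (Suc m) i k (F k i v))) = sc (sg k) (C (Suc m) k k v - sc (sg k) (C (Suc m) i i v))"
      by (simp only: E)
    then have "- C (Suc m) i k (F k i v) = sc (sg k) (C (Suc m) k k v) - C (Suc m) i i v"
      by (simp add: scale_right_diff_distrib)
    then have X: "C (Suc m) i k (F k i v) = C (Suc m) i i v - sc (sg k) (C (Suc m) k k v)"
      by (metis minus_diff_eq minus_minus)
    show ?thesis unfolding T_def using k iI by (simp add: C_scale X scale_right_diff_distrib)
  qed
  have "C (Suc (Suc m)) i i v = (\<Sum>k\<in>qI N. T k)"
    unfolding T_def using iI by (intro C_right iI)
  also have "\<dots> = (\<Sum>j\<in>{1..int N}. T j + T (-j))" by (rule sum_qI_pairs)
  also have "\<dots> = (\<Sum>j\<in>{1..<i}. T j + T (-j)) + (T i + T (-i)) + (\<Sum>j\<in>{i+1..int N}. T j + T (-j))"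
    by (rule sum_split_at[OF iN])
  also have "(\<Sum>j\<in>{1..<i}. T j + T (-j)) = 0"
  proof (intro sum.neutral ballI)
    fix j assume j: "j \<in> {1..<i}"
    then have "F j i v = 0" "F (-j) i v = 0" using jI'[OF j] hwv'[OF _ iI] ipos by auto
    then show "T j + T (-j) = 0" unfolding T_def using jI'[OF j] iI by (simp add: C_scale C_zero)
  qed
  also have "T i + T (-i) = sc lam (C (Suc m) i i v) - C (Suc m) i (-i) w"
    unfolding T_def w_def using iI niI ipos by (simp add: sg_pos sg_negv ev C_scale Fsym_i C_neg)
  also have "(\<Sum>j\<in>{i+1..int N}. T j + T (-j)) = (\<Sum>j\<in>{i+1..int N}. - (C (Suc m) j j v + C (Suc m) (-j) (-j) v))"
  proof (intro sum.cong refl)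
    fix j assume j: "j \<in> {i+1..int N}"
    then show "T j + T (-j) = - (C (Suc m) j j v + C (Suc m) (-j) (-j) v)"
      using jI[OF j] by (simp add: Tbig sg_pos sg_negv)
  qed
  finally show ?thesis by (simp only: sum_negf) simp
qed

lemma erec:
  assumes even: "(-1::complex)^m = 1"
  shows "C (Suc (Suc m)) i (-i) w = sc lam (C (Suc m) i i v) - sc lam (C (Suc m) i (-i) w)"
proof -
  define T where "T k = C (Suc m) i k (sc (sg k) (F k (-i) w))" for k
  have Tbig: "T k = sc (sg k) (C (Suc m) i (-i) w - C (Suc m) (-k) k w)" if k: "k \<in> qI N" "i < \<bar>k\<bar>" for k
  proof -
    have z: "C (Suc m) i k w = 0" using C_hw[OF hw_w iI k(1)] k ipos by auto
    have "-k \<noteq> k" "i \<noteq> -i" using k ipos by (auto simp: qI_iff)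
    then have E: "- C (Suc m) i k (F k (-i) w) = - C (Suc m) i (-i) w + C (Suc m) (-k) k w"
      using C_cov[OF k(1) niI iI k(1), of m w] z k ipos iI niI by (simp add: qsgn_kniik F_zero)
    have X: "C (Suc m) i k (F k (-i) w) = C (Suc m) i (-i) w - C (Suc m) (-k) k w"
    proof -
      have "C (Suc m) i k (F k (-i) w) = - (- C (Suc m) i k (F k (-i) w))" by simp
      also have "\<dots> = C (Suc m) i (-i) w - C (Suc m) (-k) k w" unfolding E by simp
      finally show ?thesis .
    qed
    show ?thesis unfolding T_def using k iI niI by (simp add: C_scale X)
  qed
  have "C (Suc (Suc m)) i (-i) w = (\<Sum>k\<in>qI N. T k)"
    unfolding T_def using iI niI by (intro C_right iI niI)
  also have "\<dots> = (\<Sum>j\<in>{1..int N}. T j + T (-j))" by (rule sum_qI_pairs)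
  also have "\<dots> = (\<Sum>j\<in>{1..<i}. T j + T (-j)) + (T i + T (-i)) + (\<Sum>j\<in>{i+1..int N}. T j + T (-j))"
    by (rule sum_split_at[OF iN])
  also have "(\<Sum>j\<in>{1..<i}. T j + T (-j)) = 0"
  proof (intro sum.neutral ballI)
    fix j assume j: "j \<in> {1..<i}"
    then have "F j (-i) w = 0" "F (-j) (-i) w = 0" using jI'[OF j] hw_w niI ipos by auto
    then show "T j + T (-j) = 0" unfolding T_def using jI'[OF j] iI by (simp add: C_scale C_zero)
  qed
  also have "T i + T (-i) = sc lam (C (Suc m) i i v) - sc lam (C (Suc m) i (-i) w)"
    unfolding T_def using iI niI ipos by (simp add: sg_pos sg_negv F_w F_iiw C_scale Fsym_i C_neg)
  also have "(\<Sum>j\<in>{i+1..int N}. T j + T (-j)) = (\<Sum>j\<in>{i+1..int N}. 0)"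
  proof (intro sum.cong refl)
    fix j assume j: "j \<in> {i+1..int N}"
    have S: "C (Suc m) (-j) j w = C (Suc m) j (-j) w"
      using C_sym[of j "-j" m w] jI[OF j] even by simp
    have j1: "T j = sc (sg j) (C (Suc m) i (-i) w - C (Suc m) (-j) j w)"
      using jI[OF j] by (intro Tbig) auto
    have j2: "T (-j) = sc (sg (-j)) (C (Suc m) i (-i) w - C (Suc m) (- (-j)) (-j) w)"
      using jI[OF j] by (intro Tbig) auto
    show "T j + T (-j) = 0"
      using jI[OF j] unfolding j1 j2 by (simp add: sg_pos sg_negv S)
  qed
  finally show ?thesis by simp
qed

lemma final:
  assumes "1 \<le> m"
  shows "C (2*m+1) i i v = C (2*m+1) (-i) (-i) v \<and>
         C (2*m+1) (-i) (-i) v =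
           sc (lam * (lam - 1)) (C (2*m-1) i i v)
           - sc (2 * lam) (\<Sum>j\<in>{i+1..int N}. C (2*m-1) j j v)"
proof -
  obtain p where mp: "m = Suc p" using assms by (cases m) auto
  have n3: "2*m+1 = Suc (Suc (Suc (2*p)))" and n1: "2*m-1 = Suc (2*p)" using mp by simp_all
  have ev2: "(-1::complex)^(2*p) = 1" by simp
  have symi: "C (Suc (Suc (Suc (2*p)))) (-i) (-i) v = C (Suc (Suc (Suc (2*p)))) i i v"
    using C_sym[OF iI iI, of "Suc (Suc (2*p))" v] by simp
  let ?c1 = "C (Suc (2*p))" and ?c2 = "C (Suc (Suc (2*p)))"
  have s2: "(\<Sum>j\<in>{i+1..int N}. ?c2 j j v + ?c2 (-j) (-j) v) = 0"
  proof (intro sum.neutral ballI)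
    fix j assume j: "j \<in> {i+1..int N}"
    show "?c2 j j v + ?c2 (-j) (-j) v = 0"
      using C_sym[of j j "Suc (2*p)" v] jI[OF j] by simp
  qed
  have s1: "(\<Sum>j\<in>{i+1..int N}. ?c1 j j v + ?c1 (-j) (-j) v) = sc 2 (\<Sum>j\<in>{i+1..int N}. ?c1 j j v)"
  proof -
    have "(\<Sum>j\<in>{i+1..int N}. ?c1 j j v + ?c1 (-j) (-j) v) = (\<Sum>j\<in>{i+1..int N}. sc 2 (?c1 j j v))"
    proof (intro sum.cong refl)
      fix j assume j: "j \<in> {i+1..int N}"
      show "?c1 j j v + ?c1 (-j) (-j) v = sc 2 (?c1 j j v)"
        using C_sym[of j j "2*p" v] jI[OF j] by (simp add: sc2)
    qed
    then show ?thesis by (simp add: scale_sum_right)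
  qed
  have c3: "C (Suc (Suc (Suc (2*p)))) i i v = sc lam (?c2 i i v) - ?c2 i (-i) w"
    using crec[of "Suc (2*p)"] s2 by simp
  have e2: "?c2 i (-i) w = sc lam (?c1 i i v) - sc lam (?c1 i (-i) w)"
    using erec[OF ev2] .
  have c2: "?c2 i i v = sc lam (?c1 i i v) - ?c1 i (-i) w - sc 2 (\<Sum>j\<in>{i+1..int N}. ?c1 j j v)"
    using crec[of "2*p"] s1 by simp
  have "C (Suc (Suc (Suc (2*p)))) i i v = sc (lam * (lam - 1)) (?c1 i i v) - sc (2 * lam) (\<Sum>j\<in>{i+1..int N}. ?c1 j j v)"
    unfolding c3 e2 c2 by (simp add: algebra_simps)
  then show ?thesis unfolding n3 n1 using symi by simp
qed

end

theorem proposition5: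
  fixes sc :: "complex \<Rightarrow> 'v::ab_group_add \<Rightarrow> 'v"
    and N :: nat and F :: "int \<Rightarrow> int \<Rightarrow> 'v \<Rightarrow> 'v"
    and v :: 'v and lam :: "int \<Rightarrow> complex" and m :: nat and i :: int
  assumes "N \<ge> 1"
    and "is_qrep sc N F"
    and "\<forall>a\<in>qI N. \<forall>b\<in>qI N. \<bar>a\<bar> < \<bar>b\<bar> \<longrightarrow> F a b v = 0"
    and "\<forall>a\<in>{1..int N}. F a a v = sc (lam a) v"
    and "m \<ge> 1"
    and "i \<in> {1..int N}"
  shows "Cact sc N F (2*m+1) i i v = Cact sc N F (2*m+1) (-i) (-i) v \<and>
         Cact sc N F (2*m+1) (-i) (-i) v =
           sc (lam i * (lam i - 1)) (Cact sc N F (2*m-1) i i v)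
           - sc (2 * lam i) (\<Sum>j\<in>{i+1..int N}. Cact sc N F (2*m-1) j j v)"
proof -
  have q: "qrep sc N F" using assms(2) by (rule is_qrep_qrep)
  interpret h: hwctx sc N F v "lam i" i
    using q assms(3,4,6) by (simp add: hwctx_def hwctx_axioms_def)
  show ?thesis using h.final[OF assms(5)] .
qed

end
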